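(* Let $\mathcal{D} = \langle S, A, T, s_0, \gamma, S_G\rangle$ be a goal-directed MDP with deterministic transitions (for instance a determinization $\delta(\mathcal{M})$) and $0<\gamma<1$. Let $s_i\in S\setminus S_G$ be a target state, and let $n<0<p$ be reals with $|n|\ge p$. Define the reward function $R^{s_i}: S\to\mathbb{R}$ by $R^{s_i}(s) = n$ if $s = s_i$, $R^{s_i}(s) = p$ if $s\in S_G$, and $R^{s_i}(s)=0$ otherwise, and let $V^*(s_0)$ be the optimal value at $s_0$ of the MDP $\langle S, A, T, s_0,\gamma, R^{s_i}\rangle$. Then $s_i$ is not a bottleneck state of $\mathcal{D}$ if and only if $V^*(s_0) > 0$.
   Context: A goal-directed MDP is a tuple $\langle S, A, T, s_0, \gamma, S_G\rangle$ with finite state set $S$, finite action set $A$, transition function $T: S\times A\times S\to[0,1]$ with $\sum_{s'}T(s,a,s')=1$, initial state $s_0$, discount $\gamma$, and absorbing goal set $S_G\subseteq S$. It has deterministic transitions if for every $s,a$ there is $s'$ with $T(s,a,s')=1$. A policy is a deterministic stationary map $\pi:S\to A$. A goal-reaching trace of $\pi$ from $s$ is a finite sequence $\langle x_0,\pi(x_0),x_1,\dots,x_k\rangle$ with $x_0=s$, $T(x_j,\pi(x_j),x_{j+1})>0$ for $j<k$, and $x_k\in S_G$. A state $b$ is a bottleneck state if for every policy $\pi$ and every goal-reaching trace $\langle x_0,\dots,x_k\rangle$ of $\pi$ from $s_0$, $b\in\{x_0,\dots,x_k\}$. Value convention: for a reward function $R:S\to\mathbb{R}$ and policy $\pi$,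 with state sequence $s_0=x_0,x_1,\dots$ generated by $\pi$, $V^\pi(s_0) = \mathbb{E}\big[\sum_{t=0}^{\tau}\gamma^t R(x_t)\big]$ where $\tau$ is the first time $x_t\in S_G$ (the episode terminates on entering $S_G$; if $S_G$ is never reached the sum runs over all $t\ge 0$), and $V^*(s_0)=\max_\pi V^\pi(s_0)$ over deterministic stationary policies. *)

theory Defs
  imports Complex_Main
begin

definition goal_directed_mdp :: "('s::finite \<Rightarrow> 'a::finite \<Rightarrow> 's \<Rightarrow> real) \<Rightarrow> 's set \<Rightarrow> bool" where
  "goal_directed_mdp T SG \<longleftrightarrow>
     (\<forall>s a s'. 0 \<le> T s a s' \<and> T s a s' \<le> 1) \<and>
     (\<forall>s a. (\<Sum>s'\<in>UNIV. T s a s') = 1) \<and>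
     (\<forall>s\<in>SG. \<forall>a. T s a s = 1)"

definition deterministic_transitions :: "('s::finite \<Rightarrow> 'a::finite \<Rightarrow> 's \<Rightarrow> real) \<Rightarrow> bool" where
  "deterministic_transitions T \<longleftrightarrow> (\<forall>s a. \<exists>s'. T s a s' = 1)"

definition goal_reaching_trace ::
  "('s::finite \<Rightarrow> 'a::finite \<Rightarrow> 's \<Rightarrow> real) \<Rightarrow> 's set \<Rightarrow> ('s \<Rightarrow> 'a) \<Rightarrow> 's \<Rightarrow> 's list \<Rightarrow> bool" where
  "goal_reaching_trace T SG pol s xs \<longleftrightarrow>
     xs \<noteq> [] \<and> hd xs = s \<and>
     (\<forall>j. j + 1 < length xs \<longrightarrow> T (xs ! j) (pol (xs ! j)) (xs ! (j + 1)) > 0) \<and>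
     last xs \<in> SG"

definition bottleneck_state ::
  "('s::finite \<Rightarrow> 'a::finite \<Rightarrow> 's \<Rightarrow> real) \<Rightarrow> 's \<Rightarrow> 's set \<Rightarrow> 's \<Rightarrow> bool" where
  "bottleneck_state T s0 SG b \<longleftrightarrow>
     (\<forall>pol xs. goal_reaching_trace T SG pol s0 xs \<longrightarrow> b \<in> set xs)"

text \<open>Expected truncated discounted return: expectation of the sum of gamma^t R(x_t) over
  t < k and t \<le> tau (episode stops on entering SG), starting in s, under policy pol.\<close>
fun horizon_value ::
  "('s::finite \<Rightarrow> 'a::finite \<Rightarrow> 's \<Rightarrow> real) \<Rightarrow> real \<Rightarrow> 's set \<Rightarrow> ('s \<Rightarrow> real) \<Rightarrow> ('s \<Rightarrow> 'a)
     \<Rightarrow> nat \<Rightarrow> 's \<Rightarrow> real" where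
  "horizon_value T \<gamma> SG R pol 0 s = 0"
| "horizon_value T \<gamma> SG R pol (Suc k) s =
     R s + (if s \<in> SG then 0
            else \<gamma> * (\<Sum>s'\<in>UNIV. T s (pol s) s' * horizon_value T \<gamma> SG R pol k s'))"

definition policy_value ::
  "('s::finite \<Rightarrow> 'a::finite \<Rightarrow> 's \<Rightarrow> real) \<Rightarrow> real \<Rightarrow> 's set \<Rightarrow> ('s \<Rightarrow> real) \<Rightarrow> ('s \<Rightarrow> 'a)
     \<Rightarrow> 's \<Rightarrow> real" where
  "policy_value T \<gamma> SG R pol s = lim (\<lambda>k. horizon_value T \<gamma> SG R pol k s)"

definition optimal_value ::
  "('s::finite \<Rightarrow> 'a::finite \<Rightarrow> 's \<Rightarrow> real) \<Rightarrow> real \<Rightarrow> 's set \<Rightarrow> ('s \<Rightarrow> real) \<Rightarrow> 's \<Rightarrow> real" where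
  "optimal_value T \<gamma> SG R s = (MAX pol. policy_value T \<gamma> SG R pol s)"

definition target_reward :: "'s \<Rightarrow> 's set \<Rightarrow> real \<Rightarrow> real \<Rightarrow> 's \<Rightarrow> real" where
  "target_reward si SG n p s = (if s = si then n else if s \<in> SG then p else 0)"

end

theory Submission
  imports Defs
begin

definition nxt :: "('s::finite \<Rightarrow> 'a::finite \<Rightarrow> 's \<Rightarrow> real) \<Rightarrow> 's \<Rightarrow> 'a \<Rightarrow> 's" where
  "nxt T s a = (SOME s'. T s a s' = 1)"

lemma det_T:
  assumes "goal_directed_mdp T SG" "deterministic_transitions T"
  shows "T s a s' = (if s' = nxt T s a then 1 else 0)"
proof -
  have e: "T s a (nxt T s a) = 1"
    unfolding nxt_def
  proof (rule someI_ex)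
    show "\<exists>x. T s a x = 1" using assms(2) unfolding deterministic_transitions_def by blast
  qed
  have nn: "\<And>x. 0 \<le> T s a x" using assms(1) unfolding goal_directed_mdp_def by blast
  have "(\<Sum>x\<in>UNIV. T s a x) = 1" using assms(1) unfolding goal_directed_mdp_def by blast
  moreover have "(\<Sum>x\<in>UNIV. T s a x) = T s a (nxt T s a) + (\<Sum>x\<in>UNIV - {nxt T s a}. T s a x)"
    by (simp add: sum.remove)
  ultimately have z: "(\<Sum>x\<in>UNIV - {nxt T s a}. T s a x) = 0" using e by simp
  show ?thesis
  proof (cases "s' = nxt T s a")
    case True then show ?thesis using e by simp
  next
    case False
    then have "s' \<in> UNIV - {nxt T s a}" by simp
    have "\<forall>x\<in>UNIV - {nxt T s a}. T s a x = 0"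
      using z sum_nonneg_eq_0_iff[of "UNIV - {nxt T s a}" "T s a"] nn by (metis finite)
    then show ?thesis using False by auto
  qed
qed

lemma det_sum:
  assumes "goal_directed_mdp T SG" "deterministic_transitions T"
  shows "(\<Sum>s'\<in>UNIV. T s a s' * h s') = h (nxt T s a)"
proof -
  have "(\<Sum>s'\<in>UNIV. T s a s' * h s') = (\<Sum>s'\<in>UNIV. if s' = nxt T s a then h s' else 0)"
    by (rule sum.cong) (auto simp: det_T[OF assms])
  also have "\<dots> = h (nxt T s a)" by (simp add: sum.delta')
  finally show ?thesis .
qed


definition pth where "pth T pol s t = ((\<lambda>x. nxt T x (pol x)) ^^ t) s"

lemma pth_0[simp]: "pth T pol s 0 = s" by (simp add: pth_def)
lemma pth_Suc: "pth T pol s (Suc t) = pth T pol (nxt T s (pol s)) t"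
  by (simp add: pth_def funpow_Suc_right del: funpow.simps)
lemma pth_Suc2: "pth T pol s (Suc t) = nxt T (pth T pol s t) (pol (pth T pol s t))"
  by (simp add: pth_def)

definition gt :: "('s::finite \<Rightarrow> 'a::finite \<Rightarrow> 's \<Rightarrow> real) \<Rightarrow> real \<Rightarrow> 's set \<Rightarrow> ('s \<Rightarrow> real) \<Rightarrow> ('s \<Rightarrow> 'a) \<Rightarrow> 's \<Rightarrow> nat \<Rightarrow> real" where
  "gt T \<gamma> SG R pol s t = (if \<forall>j<t. pth T pol s j \<notin> SG then \<gamma>^t * R (pth T pol s t) else 0)"

lemma horizon_closed:
  assumes "goal_directed_mdp T SG" "deterministic_transitions T"
  shows "horizon_value T \<gamma> SG R pol k s = (\<Sum>t<k. gt T \<gamma> SG R pol s t)"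
proof (induction k arbitrary: s)
  case 0 then show ?case by simp
next
  case (Suc k)
  have "horizon_value T \<gamma> SG R pol (Suc k) s =
     R s + (if s \<in> SG then 0 else \<gamma> * horizon_value T \<gamma> SG R pol k (nxt T s (pol s)))"
    by (simp add: det_sum[OF assms])
  also have "\<dots> = R s + (if s \<in> SG then 0 else \<gamma> * (\<Sum>t<k. gt T \<gamma> SG R pol (nxt T s (pol s)) t))"
    using Suc by simp
  also have "\<dots> = (\<Sum>t<Suc k. gt T \<gamma> SG R pol s t)"
  proof -
    have a: "gt T \<gamma> SG R pol s (Suc t) = (if s \<in> SG then 0 else \<gamma> * gt T \<gamma> SG R pol (nxt T s (pol s)) t)" for t
    proof -
      have "(\<forall>j<Suc t. pth T pol s j \<notin> SG) \<longleftrightarrow> s \<notin> SG \<and> (\<forall>j<t. pth T pol (nxt T s (pol s)) j \<notin> SG)"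
        by (auto simp: pth_Suc less_Suc_eq_0_disj)
      then show ?thesis by (auto simp: gt_def pth_Suc)
    qed
    have b: "gt T \<gamma> SG R pol s 0 = R s" by (simp add: gt_def)
    show ?thesis
      by (simp add: sum.lessThan_Suc_shift a b sum_distrib_left del: sum.lessThan_Suc)
  qed
  finally show ?case .
qed



lemma gt_summable:
  assumes "0 \<le> \<gamma>" "\<gamma> < 1"
  shows "summable (gt T \<gamma> SG R pol s)"
proof (rule summable_comparison_test)
  let ?M = "(\<Sum>x\<in>UNIV. \<bar>R x\<bar>)"
  show "\<exists>N. \<forall>t\<ge>N. norm (gt T \<gamma> SG R pol s t) \<le> ?M * \<gamma>^t"
  proof (intro exI allI impI)
    fix t :: nat
    have "\<bar>R (pth T pol s t)\<bar> \<le> ?M" by (rule member_le_sum) auto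
    then have "\<gamma>^t * \<bar>R (pth T pol s t)\<bar> \<le> \<gamma>^t * ?M"
      by (rule mult_left_mono) (simp add: assms)
    moreover have "norm (gt T \<gamma> SG R pol s t) \<le> \<gamma>^t * \<bar>R (pth T pol s t)\<bar>"
      unfolding gt_def using assms by (simp add: abs_mult)
    ultimately show "norm (gt T \<gamma> SG R pol s t) \<le> ?M * \<gamma>^t"
      by (simp add: algebra_simps)
  qed
  show "summable (\<lambda>t. ?M * \<gamma>^t)"
    using assms by (intro summable_mult summable_geometric) auto
qed

lemma pv_suminf:
  assumes "goal_directed_mdp T SG" "deterministic_transitions T" "0 \<le> \<gamma>" "\<gamma> < 1"
  shows "policy_value T \<gamma> SG R pol s = suminf (gt T \<gamma> SG R pol s)"
  unfolding policy_value_def horizon_closed[OF assms(1,2)]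
  by (rule limI) (rule summable_LIMSEQ[OF gt_summable[OF assms(3,4)]])

lemma trans_pth:
  assumes "goal_directed_mdp T SG" "deterministic_transitions T"
  shows "T (pth T pol s j) (pol (pth T pol s j)) (pth T pol s (Suc j)) = 1"
  by (simp add: det_T[OF assms] pth_Suc2)

lemma trace_pth:
  assumes "goal_directed_mdp T SG" "deterministic_transitions T"
    and "goal_reaching_trace T SG pol s xs" "j < length xs"
  shows "xs ! j = pth T pol s j"
  using assms(4)
proof (induction j)
  case 0 then show ?case using assms(3) by (simp add: goal_reaching_trace_def hd_conv_nth)
next
  case (Suc j)
  then have "T (xs ! j) (pol (xs ! j)) (xs ! (j + 1)) > 0"
    using assms(3) unfolding goal_reaching_trace_def by auto
  then have "xs ! Suc j = nxt T (xs ! j) (pol (xs ! j))"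
    by (simp add: det_T[OF assms(1,2)] split: if_splits)
  then show ?case using Suc by (simp add: pth_Suc2)
qed

theorem proposition3:
  fixes T :: "'s::finite \<Rightarrow> 'a::finite \<Rightarrow> 's \<Rightarrow> real"
    and SG :: "'s set" and s0 si :: 's and \<gamma> n p :: real
  assumes "goal_directed_mdp T SG"
    and "deterministic_transitions T"
    and "0 < \<gamma>" and "\<gamma> < 1"
    and "si \<notin> SG"
    and "n < 0" and "0 < p" and "\<bar>n\<bar> \<ge> p"
  shows "\<not> bottleneck_state T s0 SG si \<longleftrightarrow>
         optimal_value T \<gamma> SG (target_reward si SG n p) s0 > 0"
proof -
  let ?R = "target_reward si SG n p"
  let ?f = "\<lambda>pol. policy_value T \<gamma> SG ?R pol s0"
  have opt: "optimal_value T \<gamma> SG ?R s0 > 0 \<longleftrightarrow> (\<exists>pol. ?f pol > 0)"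
    unfolding optimal_value_def by (subst Max_gr_iff) auto
  have pv: "?f pol = suminf (gt T \<gamma> SG ?R pol s0)" for pol
    using pv_suminf[OF assms(1,2)] assms(3,4) by simp
  have Rle: "x \<notin> SG \<Longrightarrow> ?R x \<le> 0" for x
    using assms(6) by (simp add: target_reward_def)
  show ?thesis
  proof
    assume "\<not> bottleneck_state T s0 SG si"
    then obtain pol xs where tr: "goal_reaching_trace T SG pol s0 xs" and nsi: "si \<notin> set xs"
      unfolding bottleneck_state_def by blast
    let ?x = "pth T pol s0"
    define K where "K = length xs - 1"
    have xsK: "K < length xs" using tr unfolding K_def goal_reaching_trace_def by (cases xs) auto
    have "last xs = xs ! K" using tr unfolding K_def goal_reaching_trace_def by (simp add: last_conv_nth)
    then have "?x K \<in> SG" using tr trace_pth[OF assms(1,2) tr xsK] unfolding goal_reaching_trace_def by simp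
    define \<tau> where "\<tau> = (LEAST t. ?x t \<in> SG)"
    have tG: "?x \<tau> \<in> SG" unfolding \<tau>_def by (rule LeastI) fact
    have tK: "\<tau> \<le> K" unfolding \<tau>_def by (rule Least_le) fact
    have bef: "t < \<tau> \<Longrightarrow> ?x t \<notin> SG" for t unfolding \<tau>_def by (rule not_less_Least)
    have z: "gt T \<gamma> SG ?R pol s0 t = 0" if "t \<notin> {\<tau>}" for t
    proof (cases "t < \<tau>")
      case True
      then have "?x t = xs ! t" using trace_pth[OF assms(1,2) tr, of t] tK xsK by simp
      moreover have "xs ! t \<in> set xs" using True tK xsK by simp
      ultimately have "?x t \<noteq> si" using nsi by auto
      then show ?thesis using bef[OF True] by (simp add: gt_def target_reward_def)
    next
      case False
      then have "\<tau> < t" using that by simp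
      then show ?thesis using tG by (auto simp: gt_def)
    qed
    have "gt T \<gamma> SG ?R pol s0 sums (\<Sum>t\<in>{\<tau>}. gt T \<gamma> SG ?R pol s0 t)"
      by (rule sums_finite) (use z in auto)
    then have "?f pol = gt T \<gamma> SG ?R pol s0 \<tau>" using pv by (simp add: sums_iff)
    also have "\<dots> = \<gamma>^\<tau> * p" using tG bef assms(5) by (auto simp: gt_def target_reward_def)
    also have "\<dots> > 0" using assms by simp
    finally show "optimal_value T \<gamma> SG ?R s0 > 0" using opt by blast
  next
    assume "optimal_value T \<gamma> SG ?R s0 > 0"
    then obtain pol where pos: "?f pol > 0" using opt by blast
    let ?x = "pth T pol s0"
    let ?g = "gt T \<gamma> SG ?R pol s0"
    show "\<not> bottleneck_state T s0 SG si"
    proof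
      assume bn: "bottleneck_state T s0 SG si"
      show False
      proof (cases "\<exists>t. ?x t \<in> SG")
        case False
        then have "\<forall>t. ?g t \<le> 0 * 0"
          using Rle assms(3) by (simp add: gt_def mult_nonneg_nonpos)
        then have "suminf ?g \<le> suminf (\<lambda>_. 0::real)"
          by (intro suminf_le gt_summable) (use assms(3,4) in auto)
        then show False using pos pv by simp
      next
        case True
        then obtain K where K: "?x K \<in> SG" by blast
        define \<tau> where "\<tau> = (LEAST t. ?x t \<in> SG)"
        have tG: "?x \<tau> \<in> SG" unfolding \<tau>_def by (rule LeastI) fact
        have bef: "t < \<tau> \<Longrightarrow> ?x t \<notin> SG" for t unfolding \<tau>_def by (rule not_less_Least)
        define xs where "xs = map ?x [0..<Suc \<tau>]"
        have "goal_reaching_trace T SG pol s0 xs"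
          unfolding goal_reaching_trace_def
        proof (intro conjI allI impI)
          show "xs \<noteq> []" unfolding xs_def by simp
          show "hd xs = s0" unfolding xs_def by (simp add: hd_map del: upt_Suc)
          show "last xs \<in> SG" unfolding xs_def using tG by (simp add: last_map del: upt_Suc)
          fix j assume "j + 1 < length xs"
          then have "j + 1 < Suc \<tau>" unfolding xs_def by simp
          then have "xs ! j = ?x j" "xs ! (j+1) = ?x (Suc j)" unfolding xs_def
            by (simp_all del: upt_Suc)
          then show "T (xs ! j) (pol (xs ! j)) (xs ! (j + 1)) > 0"
            using trans_pth[OF assms(1,2), of pol s0 j] by simp
        qed
        then have "si \<in> set xs" using bn unfolding bottleneck_state_def by blast
        then obtain t1 where t1: "t1 \<le> \<tau>" "?x t1 = si" unfolding xs_def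
          by (auto simp del: upt_Suc) (metis less_Suc_eq_le)
        have t1l: "t1 < \<tau>" using t1 tG assms(5) by (metis le_neq_implies_less)
        have z: "?g t = 0" if "t \<notin> {..\<tau>}" for t using that tG by (auto simp: gt_def)
        have "?g sums (\<Sum>t\<in>{..\<tau>}. ?g t)"
          by (rule sums_finite) (use z in auto)
        then have fv: "?f pol = (\<Sum>t\<in>{..\<tau>}. ?g t)" using pv by (simp add: sums_iff)
        have sub: "{t1, \<tau>} \<subseteq> {..\<tau>}" using t1 by auto
        have "(\<Sum>t\<in>{..\<tau>}. ?g t) = (\<Sum>t\<in>{..\<tau>} - {t1, \<tau>}. ?g t) + (\<Sum>t\<in>{t1, \<tau>}. ?g t)"
          by (rule sum.subset_diff[OF sub]) auto
        also have "(\<Sum>t\<in>{..\<tau>} - {t1, \<tau>}. ?g t) \<le> 0"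
        proof (rule sum_nonpos)
          fix t assume "t \<in> {..\<tau>} - {t1, \<tau>}"
          then have tl: "t < \<tau>" by auto
          then show "?g t \<le> 0" using bef Rle[OF bef[OF tl]] assms(3)
            by (simp add: gt_def mult_nonneg_nonpos)
        qed
        also have "(\<Sum>t\<in>{t1, \<tau>}. ?g t) = \<gamma>^t1 * n + \<gamma>^\<tau> * p"
          using t1l t1 bef tG assms(5) by (auto simp: gt_def target_reward_def)
        also have "\<gamma>^\<tau> * p \<le> \<gamma>^\<tau> * (-n)" using assms by (intro mult_left_mono) auto
        also have "\<gamma>^\<tau> < \<gamma>^t1" using assms t1l by (simp add: power_strict_decreasing)
        then have "\<gamma>^\<tau> * (-n) < \<gamma>^t1 * (-n)" using assms by simp
        finally show False using fv pos by linarith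
      qed
    qed
  qed
qed

end
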